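(* For integers $i,j\geq 0$ and $t\geq 1$ let $h_{i,j}(t)$ be the number of proper hyperbinary expansions $(\varepsilon_{\nu-1},\ldots,\varepsilon_0)$ of $t-1$ such that $|\{0\leq \ell<\nu:\varepsilon_\ell=2\}|=i$ and $|\{0\leq \ell<\nu:\varepsilon_\ell=0\}|=j$. Then for all $k\in\mathbb{Z}$ and $t\ge1$, \[ \varphi(k,t)=\sum_{\substack{i,j\geq 0\\i-j=k}}2^{-(i+j)}h_{i,j}(t). \]
   Context: A hyperbinary expansion of a nonnegative integer $n$ is a sequence $(\varepsilon_{\nu-1},\ldots,\varepsilon_0)\in \{0,1,2\}^{\nu}$ ($\nu\ge0$) with $\sum_{0\leq i<\nu}\varepsilon_i2^i=n$; it is proper if either $\nu=0$, or $\nu>0$ and $\varepsilon_{\nu-1}\neq 0$. Define numbers $\varphi(k,t)$ for $k\in\mathbb{Z}$ and integers $t\ge1$ by $\varphi(0,1)=1$, $\varphi(k,1)=0$ for $k\neq0$, and for $t\ge1$: $\varphi(k,2t)=\varphi(k,t)$, $\varphi(k,2t+1)=\frac12\varphi(k-1,t)+\frac12\varphi(k+1,t+1)$. *)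

theory Defs
  imports "HOL-Analysis.Analysis"
begin

text \<open>A digit sequence (eps_{nu-1},...,eps_0) is represented as a list es with
  es ! l = eps_l (least significant digit first), length es = nu.\<close>

definition hyperbinary_value :: "nat list \<Rightarrow> nat" where
  "hyperbinary_value es = (\<Sum>l<length es. es ! l * 2 ^ l)"

definition is_hyperbinary_exp :: "nat \<Rightarrow> nat list \<Rightarrow> bool" where
  "is_hyperbinary_exp n es \<longleftrightarrow> set es \<subseteq> {0,1,2} \<and> hyperbinary_value es = n"

definition is_proper_hyperbinary_exp :: "nat \<Rightarrow> nat list \<Rightarrow> bool" where
  "is_proper_hyperbinary_exp n es \<longleftrightarrow>
     is_hyperbinary_exp n es \<and> (es = [] \<or> last es \<noteq> 0)"

definition hcount :: "nat \<Rightarrow> nat \<Rightarrow> nat \<Rightarrow> nat" where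
  "hcount i j t = card {es. is_proper_hyperbinary_exp (t - 1) es
       \<and> card {l. l < length es \<and> es ! l = 2} = i
       \<and> card {l. l < length es \<and> es ! l = 0} = j}"

function phi :: "int \<Rightarrow> nat \<Rightarrow> real" where
  "phi k t = (if t \<le> 1 then (if t = 1 \<and> k = 0 then 1 else 0)
     else if even t then phi k (t div 2)
     else phi (k - 1) (t div 2) / 2 + phi (k + 1) (t div 2 + 1) / 2)"
  by auto
termination
  by (relation "Wellfounded.measure snd") (auto elim!: oddE)

end

theory Submission
  imports Defs
begin

fun hv :: "nat list \<Rightarrow> nat" where
  "hv [] = 0" | "hv (a#r) = a + 2 * hv r"

lemma hv_eq: "hyperbinary_value es = hv es"
proof (induction es)
  case Nil then show ?case by (simp add: hyperbinary_value_def)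
next
  case (Cons a r)
  have "hyperbinary_value (a#r) = a + (\<Sum>l<length r. r ! l * 2 ^ Suc l)"
    unfolding hyperbinary_value_def by (simp only: length_Cons sum.lessThan_Suc_shift) simp
  also have "\<dots> = a + 2 * hyperbinary_value r"
    unfolding hyperbinary_value_def by (simp add: sum_distrib_left mult_ac)
  finally show ?case using Cons by simp
qed

definition P :: "nat \<Rightarrow> nat list \<Rightarrow> bool" where
  "P n es \<longleftrightarrow> set es \<subseteq> {0,1,2} \<and> hv es = n \<and> (es = [] \<or> last es \<noteq> 0)"

lemma proper_P: "is_proper_hyperbinary_exp n es = P n es"
  unfolding is_proper_hyperbinary_exp_def is_hyperbinary_exp_def P_def hv_eq by simp

lemma P_Nil: "P n [] \<longleftrightarrow> n = 0" by (auto simp: P_def)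

lemma P_Cons: "P n (a#r) \<longleftrightarrow> a \<le> 2 \<and> n = a + 2 * hv r \<and> P (hv r) r \<and> (r = [] \<longrightarrow> a \<noteq> 0)"
  by (cases r) (auto simp: P_def)

lemma P_zero: "P 0 es \<Longrightarrow> es = []"
  by (induction es) (auto simp: P_Cons)

lemma P_hv: "P n es \<Longrightarrow> hv es = n" by (simp add: P_def)

lemma E_odd_aux: "P m r \<Longrightarrow> P (Suc (2*m)) (Suc 0 # r)"
  by (auto simp: P_Cons P_hv)

definition E :: "nat \<Rightarrow> nat list set" where "E n = {es. P n es}"

lemma E0: "E 0 = {[]}"
  using P_zero by (auto simp: E_def P_Nil)

lemma E_odd: "E (2*m+1) = Cons 1 ` E m"
proof
  show "E (2*m+1) \<subseteq> Cons 1 ` E m"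
  proof
    fix es assume "es \<in> E (2*m+1)"
    then have p: "P (2*m+1) es" by (simp add: E_def)
    then obtain a r where es: "es = a#r" by (cases es) (auto simp: P_Nil)
    with p have "a \<le> 2" "2*m+1 = a + 2*hv r" "P (hv r) r" by (auto simp: P_Cons)
    then have "a = 1" "hv r = m" by presburger+
    with es \<open>P (hv r) r\<close> show "es \<in> Cons 1 ` E m" by (auto simp: E_def)
  qed
next
  show "Cons 1 ` E m \<subseteq> E (2*m+1)"
    by (auto simp: E_def intro!: E_odd_aux[simplified])
qed

lemma E_odd': "E (Suc (2*m)) = Cons 1 ` E m" using E_odd[of m] by simp

lemma E_even: assumes "m > 0" shows "E (2*m) = Cons 0 ` E m \<union> Cons 2 ` E (m-1)"
proof
  show "E (2*m) \<subseteq> Cons 0 ` E m \<union> Cons 2 ` E (m-1)"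
  proof
    fix es assume "es \<in> E (2*m)"
    then have p: "P (2*m) es" by (simp add: E_def)
    then obtain a r where es: "es = a#r" using assms by (cases es) (auto simp: P_Nil)
    with p have "a \<le> 2" "2*m = a + 2*hv r" "P (hv r) r" by (auto simp: P_Cons)
    then have "(a = 0 \<and> hv r = m) \<or> (a = 2 \<and> hv r = m - 1)" by presburger
    with es \<open>P (hv r) r\<close> show "es \<in> Cons 0 ` E m \<union> Cons 2 ` E (m-1)" by (auto simp: E_def)
  qed
next
  have "r \<in> E m \<Longrightarrow> r \<noteq> []" for r using assms by (auto simp: E_def P_Nil)
  then show "Cons 0 ` E m \<union> Cons 2 ` E (m-1) \<subseteq> E (2*m)"
    using assms by (auto simp: E_def P_Cons P_hv)
qed

lemma E_fin: "finite (E n)"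
proof (induction n rule: less_induct)
  case (less n)
  show ?case
  proof (cases "n = 0")
    case True then show ?thesis by (simp add: E0)
  next
    case False
    show ?thesis
    proof (cases "even n")
      case True
      then obtain m where n: "n = 2*m" by blast
      with False have "m > 0" by simp
      with n less show ?thesis by (simp add: E_even)
    next
      case odd: False
      then obtain m where n: "n = 2*m+1" using oddE by blast
      with less show ?thesis by (simp add: E_odd')
    qed
  qed
qed

definition c :: "nat \<Rightarrow> nat list \<Rightarrow> nat" where
  "c x es = card {l. l < length es \<and> es ! l = x}"

lemma c_filter: "c x es = length (filter (\<lambda>y. y = x) es)"
  unfolding c_def by (simp add: length_filter_conv_card)

definition f :: "int \<Rightarrow> nat list \<Rightarrow> real" where
  "f k es = (if int (c 2 es) - int (c 0 es) = k then (1/2) ^ (c 2 es + c 0 es) else 0)"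

definition psiF :: "int \<Rightarrow> nat \<Rightarrow> real" where
  "psiF k t = (\<Sum>es\<in>E (t-1). f k es)"

lemma f1: "f k (1#r) = f k r" by (simp add: f_def c_filter)
lemma f0: "f k (0#r) = f (k+1) r / 2"
  by (auto simp: f_def c_filter)
lemma f2: "f k (2#r) = f (k-1) r / 2"
  by (auto simp: f_def c_filter)

lemma psi1: "psiF k 1 = (if k = 0 then 1 else 0)"
  by (simp add: psiF_def E0 f_def c_def)

lemma psi_even: "s \<ge> 1 \<Longrightarrow> psiF k (2* s) = psiF k s"
proof -
  assume s: "s \<ge> 1"
  have "2* s - 1 = 2*(s-1)+1" using s by simp
  then have "E (2 * s - 1) = Cons 1 ` E (s-1)" using E_odd[of "s-1"] by simp
  then have "psiF k (2* s) = (\<Sum>es\<in>Cons 1 ` E (s-1). f k es)" by (simp add: psiF_def)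
  also have "\<dots> = (\<Sum>r\<in>E (s-1). f k (1#r))" by (simp add: sum.reindex)
  finally show ?thesis using f1[of k] by (simp add: psiF_def)
qed

lemma psi_odd: "s \<ge> 1 \<Longrightarrow> psiF k (2* s+1) = psiF (k-1) s / 2 + psiF (k+1) (s+1) / 2"
proof -
  assume s: "s \<ge> 1"
  have "psiF k (2* s+1) = (\<Sum>es\<in>Cons 0 ` E s \<union> Cons 2 ` E (s-1). f k es)"
    using s by (simp add: psiF_def E_even)
  also have "\<dots> = (\<Sum>es\<in>Cons 0 ` E s. f k es) + (\<Sum>es\<in>Cons 2 ` E (s-1). f k es)"
    by (rule sum.union_disjoint) (auto simp: E_fin)
  also have "\<dots> = (\<Sum>r\<in>E s. f k (0#r)) + (\<Sum>r\<in>E (s-1). f k (2#r))"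
    by (simp add: sum.reindex)
  also have "\<dots> = psiF (k+1) (s+1) / 2 + psiF (k-1) s / 2"
    by (simp add: f0 f2 psiF_def sum_divide_distrib)
  finally show ?thesis by simp
qed

lemma phi_psi: "t \<ge> 1 \<Longrightarrow> phi k t = psiF k t"
proof (induction k t rule: phi.induct)
  case (1 k t)
  show ?case
  proof (cases "t \<le> 1")
    case True
    with 1 have "t = 1" by simp
    then show ?thesis using psi1 by simp
  next
    case False
    show ?thesis
    proof (cases "even t")
      case True
      then obtain s where t: "t = 2* s" by blast
      with False have s: "s \<ge> 1" by simp
      have "phi k t = phi k s" using False True t by simp
      also have "\<dots> = psiF k s" using 1(1)[OF False True] t s by simp
      finally show ?thesis using psi_even[OF s] t by simp
    next
      case odd: False
      then obtain s where t: "t = 2* s+1" using oddE by blast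
      with False have s: "s \<ge> 1" by simp
      have td: "t div 2 = s" using t by simp
      have "phi k t = phi (k-1) s / 2 + phi (k+1) (s+1) / 2" using False odd td by simp
      also have "\<dots> = psiF (k-1) s / 2 + psiF (k+1) (s+1) / 2"
        using 1(2)[OF False odd] 1(3)[OF False odd] td s by simp
      finally show ?thesis using psi_odd[OF s] t by simp
    qed
  qed
qed

theorem proposition3p3:
  fixes k :: int and t :: nat
  assumes "t \<ge> 1"
  shows "phi k t = (\<Sum>\<^sub>\<infinity>(i, j) \<in> {p :: nat \<times> nat. int (fst p) - int (snd p) = k}.
                      (1 / 2) ^ (i + j) * real (hcount i j t))"
proof -
  define S where "S = E (t-1)"
  define cc where "cc = (\<lambda>es. (c 2 es, c 0 es))"
  define A where "A = {p :: nat \<times> nat. int (fst p) - int (snd p) = k}"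
  define T where "T = cc ` S \<inter> A"
  define g where "g = (\<lambda>(i::nat, j::nat). (1 / 2::real) ^ (i + j) * real (hcount i j t))"
  have finS: "finite S" by (simp add: S_def E_fin)
  have finT: "finite T" using finS by (simp add: T_def)
  have hc: "hcount i j t = card {es\<in>S. cc es = (i,j)}" for i j
    unfolding hcount_def S_def E_def cc_def c_def proper_P by (rule arg_cong[where f=card]) auto
  have "infsum g A = infsum g T"
  proof (rule infsum_cong_neutral)
    fix p assume "p \<in> A - T"
    then have e: "{es\<in>S. cc es = p} = {}" by (auto simp: T_def)
    have "card {es\<in>S. cc es = p} = 0" unfolding e by simp
    then show "g p = 0" by (cases p) (simp add: g_def hc)
  qed (auto simp: T_def)
  also have "\<dots> = sum g T" using finT by simp
  also have "\<dots> = (\<Sum>p\<in>T. \<Sum>es\<in>{es\<in>{es\<in>S. cc es \<in> A}. cc es = p}. (1/2::real) ^ (c 2 es + c 0 es))"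
  proof (rule sum.cong)
    fix p assume "p \<in> T"
    then have pA: "p \<in> A" by (simp add: T_def)
    obtain i j where p: "p = (i,j)" by (cases p)
    have "{es\<in>{es\<in>S. cc es \<in> A}. cc es = p} = {es\<in>S. cc es = (i,j)}" using pA p by auto
    moreover have "(1/2::real) ^ (c 2 es + c 0 es) = (1/2) ^ (i+j)" if "es \<in> {es\<in>S. cc es = (i,j)}" for es
      using that by (simp add: cc_def)
    ultimately show "g p = (\<Sum>es\<in>{es\<in>{es\<in>S. cc es \<in> A}. cc es = p}. (1/2::real) ^ (c 2 es + c 0 es))"
      by (simp add: g_def hc p)
  qed simp
  also have "\<dots> = (\<Sum>es\<in>{es\<in>S. cc es \<in> A}. (1/2::real) ^ (c 2 es + c 0 es))"
    by (rule sum.group) (auto simp: finS finT T_def)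
  also have "\<dots> = (\<Sum>es\<in>S. f k es)"
    unfolding f_def using finS by (simp add: sum.inter_filter[symmetric] cc_def A_def)
  also have "\<dots> = phi k t" using phi_psi[OF assms] by (simp add: psiF_def S_def)
  finally show ?thesis by (simp add: A_def g_def)
qed

end
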